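(* Let $\pi$ be a group, $\Lambda=\mathbb{Z}[\pi]$, and let $D_2\xrightarrow{d_2}D_1\xrightarrow{d_1}D_0$ be a sequence of finitely generated projective $\Lambda$-modules that is exact at $D_1$. Let $d^2\colon D^1\to D^2$ be the dual of $d_2$ and let $f\colon L\to D^1$ be a $\Lambda$-homomorphism with image $f(L)=\ker d^2$. Then $$D_2\xrightarrow{d_2}D_1\xrightarrow{f^*}\operatorname{Hom}_\Lambda(L,\Lambda)$$ is exact at $D_1$.
   Context: $D^i=\operatorname{Hom}_\Lambda(D_i,\Lambda)$, and $D_1$ is identified with its double dual $\operatorname{Hom}_\Lambda(D^1,\Lambda)$ via the canonical isomorphism (valid for finitely generated projective modules), so that $f^*\colon D_1\cong\operatorname{Hom}_\Lambda(D^1,\Lambda)\to\operatorname{Hom}_\Lambda(L,\Lambda)$. *)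

theory Defs
  imports Main "HOL-Library.Poly_Mapping" "HOL-Library.Function_Algebras"
begin

text \<open>Left modules over a ring 'r, given by a carrier set inside an abelian group type
  (addition, zero, negation inherited from the type) and a scalar multiplication.\<close>

definition lmodule :: "'m set \<Rightarrow> ('r::ring_1 \<Rightarrow> 'm::ab_group_add \<Rightarrow> 'm) \<Rightarrow> bool" where
  "lmodule M s \<longleftrightarrow>
     0 \<in> M \<and> (\<forall>x\<in>M. \<forall>y\<in>M. x + y \<in> M) \<and> (\<forall>x\<in>M. - x \<in> M) \<and>
     (\<forall>r. \<forall>x\<in>M. s r x \<in> M) \<and>
     (\<forall>r. \<forall>x\<in>M. \<forall>y\<in>M. s r (x + y) = s r x + s r y) \<and>
     (\<forall>r q. \<forall>x\<in>M. s (r + q) x = s r x + s q x) \<and>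
     (\<forall>r q. \<forall>x\<in>M. s (r * q) x = s r (s q x)) \<and>
     (\<forall>x\<in>M. s 1 x = x)"

definition lhom :: "'m set \<Rightarrow> ('r::ring_1 \<Rightarrow> 'm::ab_group_add \<Rightarrow> 'm) \<Rightarrow>
    'n set \<Rightarrow> ('r \<Rightarrow> 'n::ab_group_add \<Rightarrow> 'n) \<Rightarrow> ('m \<Rightarrow> 'n) \<Rightarrow> bool" where
  "lhom M s N t h \<longleftrightarrow>
     (\<forall>x\<in>M. h x \<in> N) \<and> (\<forall>x\<in>M. \<forall>y\<in>M. h (x + y) = h x + h y) \<and>
     (\<forall>r. \<forall>x\<in>M. h (s r x) = t r (h x))"

definition free_carrier :: "nat \<Rightarrow> (nat \<Rightarrow> 'r::ring_1) set" where
  "free_carrier n = {v. \<forall>k\<ge>n. v k = 0}"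

definition free_smult :: "'r::ring_1 \<Rightarrow> (nat \<Rightarrow> 'r) \<Rightarrow> (nat \<Rightarrow> 'r)" where
  "free_smult r v = (\<lambda>k. r * v k)"

definition fg_projective :: "'m set \<Rightarrow> ('r::ring_1 \<Rightarrow> 'm::ab_group_add \<Rightarrow> 'm) \<Rightarrow> bool" where
  "fg_projective M s \<longleftrightarrow> lmodule M s \<and>
     (\<exists>n::nat. \<exists>i p. lhom M s (free_carrier n) free_smult i \<and>
                     lhom (free_carrier n) free_smult M s p \<and>
                     (\<forall>x\<in>M. p (i x) = x))"

text \<open>The integral group ring Z[pi] of a group pi (written additively as a type of class
  group_add; the ring product of finitely supported functions is convolution over the group law).
  Its standard involution sends sum a_g g to sum a_g g^{-1}.\<close>

type_synonym 'g grpring = "'g \<Rightarrow>\<^sub>0 int"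

definition grp_conj :: "'g::group_add grpring \<Rightarrow> 'g grpring" where
  "grp_conj x = Abs_poly_mapping (\<lambda>g. Poly_Mapping.lookup x (- g))"

text \<open>Dual module Hom_\<Lambda>(M,\<Lambda>): \<Lambda>-linear functionals (extensional, i.e. 0 outside M),
  made into a left module via the involution: (\<lambda>.\<phi>)(x) = \<phi>(x) * conj \<lambda>.\<close>

definition dual_carrier :: "'m::ab_group_add set \<Rightarrow> ('g::group_add grpring \<Rightarrow> 'm \<Rightarrow> 'm)
    \<Rightarrow> ('m \<Rightarrow> 'g grpring) set" where
  "dual_carrier M s = {\<phi>. lhom M s UNIV (*) \<phi> \<and> (\<forall>x. x \<notin> M \<longrightarrow> \<phi> x = 0)}"

definition dual_smult :: "'m::ab_group_add set \<Rightarrow> 'g::group_add grpring \<Rightarrow> ('m \<Rightarrow> 'g grpring)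
    \<Rightarrow> ('m \<Rightarrow> 'g grpring)" where
  "dual_smult M r \<phi> = (\<lambda>x. if x \<in> M then \<phi> x * grp_conj r else 0)"

definition dual_map :: "'m set \<Rightarrow> ('m \<Rightarrow> 'n) \<Rightarrow> ('n \<Rightarrow> 'g::group_add grpring) \<Rightarrow> ('m \<Rightarrow> 'g grpring)" where
  "dual_map M h \<phi> = (\<lambda>x. if x \<in> M then \<phi> (h x) else 0)"

text \<open>For f : L \<rightarrow> D^1, the map f^* : D_1 \<cong> Hom(D^1,\<Lambda>) \<rightarrow> Hom(L,\<Lambda>), where the canonical
  isomorphism D_1 \<rightarrow> Hom(D^1,\<Lambda>) is x \<mapsto> (\<phi> \<mapsto> conj(\<phi> x)).\<close>

definition dual_star :: "'l set \<Rightarrow> ('l \<Rightarrow> ('d \<Rightarrow> 'g::group_add grpring)) \<Rightarrow> 'd \<Rightarrow> ('l \<Rightarrow> 'g grpring)" where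
  "dual_star L f x = (\<lambda>l. if l \<in> L then grp_conj (f l x) else 0)"

end

theory Submission
  imports Defs
begin

lemma lookup_grp_conj: "Poly_Mapping.lookup (grp_conj x) g = Poly_Mapping.lookup x (- g)"
proof -
  have "finite {g. Poly_Mapping.lookup x (- g) \<noteq> 0}"
  proof -
    have "{g. Poly_Mapping.lookup x (- g) \<noteq> 0} = uminus ` {g. Poly_Mapping.lookup x g \<noteq> 0}"
      by (auto intro!: image_eqI[where x="- _"])
    then show ?thesis using finite_lookup by simp
  qed
  then show ?thesis unfolding grp_conj_def by (simp add: Abs_poly_mapping_inverse)
qed

lemma grp_conj_0_iff: "grp_conj x = 0 \<longleftrightarrow> x = 0"
proof
  assume "grp_conj x = 0"
  then have "\<forall>g. Poly_Mapping.lookup x (- g) = 0"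
    by (metis lookup_grp_conj lookup_zero)
  then have "\<forall>g. Poly_Mapping.lookup x g = 0" by (metis minus_minus)
  then show "x = 0" by (intro poly_mapping_eqI) simp
next
  assume "x = 0" then show "grp_conj x = 0"
    by (intro poly_mapping_eqI) (simp add: lookup_grp_conj)
qed

theorem lemma5p6:
  fixes D0 :: "'d0::ab_group_add set" and s0 :: "'g::group_add grpring \<Rightarrow> 'd0 \<Rightarrow> 'd0"
    and D1 :: "'d1::ab_group_add set" and s1 :: "'g grpring \<Rightarrow> 'd1 \<Rightarrow> 'd1"
    and D2 :: "'d2::ab_group_add set" and s2 :: "'g grpring \<Rightarrow> 'd2 \<Rightarrow> 'd2"
    and L :: "'l::ab_group_add set" and sL :: "'g grpring \<Rightarrow> 'l \<Rightarrow> 'l"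
    and d1 :: "'d1 \<Rightarrow> 'd0" and d2 :: "'d2 \<Rightarrow> 'd1"
    and f :: "'l \<Rightarrow> ('d1 \<Rightarrow> 'g grpring)"
  assumes P0: "fg_projective D0 s0"
    and P1: "fg_projective D1 s1"
    and P2: "fg_projective D2 s2"
    and hd1: "lhom D1 s1 D0 s0 d1"
    and hd2: "lhom D2 s2 D1 s1 d2"
    and exact: "d2 ` D2 = {x \<in> D1. d1 x = 0}"
    and modL: "lmodule L sL"
    and hf: "lhom L sL (dual_carrier D1 s1) (dual_smult D1) f"
    and imf: "f ` L = {\<phi> \<in> dual_carrier D1 s1. dual_map D2 d2 \<phi> = 0}"
  shows "d2 ` D2 = {x \<in> D1. dual_star L f x = 0}"
proof
  show "d2 ` D2 \<subseteq> {x \<in> D1. dual_star L f x = 0}"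
  proof
    fix x assume "x \<in> d2 ` D2"
    then obtain y where y: "y \<in> D2" "x = d2 y" by blast
    have xD: "x \<in> D1" using hd2 y unfolding lhom_def by blast
    have "\<forall>l\<in>L. f l (d2 y) = 0"
    proof
      fix l assume "l \<in> L"
      then have "dual_map D2 d2 (f l) = 0" using imf by blast
      then have "dual_map D2 d2 (f l) y = 0" by simp
      then show "f l (d2 y) = 0" using y unfolding dual_map_def by simp
    qed
    then have "dual_star L f x = 0"
      unfolding dual_star_def using y by (auto simp: grp_conj_0_iff)
    then show "x \<in> {x \<in> D1. dual_star L f x = 0}" using xD by blast
  qed
next
  show "{x \<in> D1. dual_star L f x = 0} \<subseteq> d2 ` D2"
  proof
    fix x assume "x \<in> {x \<in> D1. dual_star L f x = 0}"
    then have xD: "x \<in> D1" and xs: "dual_star L f x = 0" by auto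
    have fz: "\<phi> x = 0" if phl: "\<phi> \<in> f ` L" for \<phi>
    proof -
      obtain l where l: "l \<in> L" "\<phi> = f l" using phl by blast
      have "dual_star L f x l = 0" using xs by simp
      then have "grp_conj (f l x) = 0" using l unfolding dual_star_def by simp
      then show ?thesis using l by (simp add: grp_conj_0_iff)
    qed
    from P0 obtain n i p where mod0: "lmodule D0 s0"
      and hi: "lhom D0 s0 (free_carrier n) free_smult i"
      and hp: "lhom (free_carrier n) free_smult D0 s0 p"
      and pi: "\<forall>z\<in>D0. p (i z) = z"
      unfolding fg_projective_def by blast
    have z0: "0 \<in> D0" using mod0 unfolding lmodule_def by blast
    have i0: "i 0 = 0"
    proof -
      have "i (0 + 0) = i 0 + i 0" using hi z0 unfolding lhom_def by blast
      then show ?thesis by simp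
    qed
    have fc0: "(0::nat \<Rightarrow> 'g grpring) \<in> free_carrier n" unfolding free_carrier_def by simp
    have p0: "p 0 = 0"
    proof -
      have "p (0 + 0) = p 0 + p 0" using hp fc0 unfolding lhom_def by blast
      then show ?thesis by simp
    qed
    define \<phi> where "\<phi> k = (\<lambda>z. if z \<in> D1 then i (d1 z) k else 0)" for k
    have phiin: "\<phi> k \<in> f ` L" for k
    proof -
      have lin: "lhom D1 s1 UNIV (*) (\<phi> k)"
        unfolding lhom_def
      proof (intro conjI ballI allI)
        fix a b assume a: "a \<in> D1" and b: "b \<in> D1"
        have ab: "a + b \<in> D1" using P1 a b unfolding fg_projective_def lmodule_def by blast
        have "d1 (a + b) = d1 a + d1 b" using hd1 a b unfolding lhom_def by blast
        moreover have "d1 a \<in> D0" "d1 b \<in> D0" using hd1 a b unfolding lhom_def by auto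
        ultimately have "i (d1 (a + b)) = i (d1 a) + i (d1 b)" using hi unfolding lhom_def by auto
        then show "\<phi> k (a + b) = \<phi> k a + \<phi> k b" using a b ab unfolding \<phi>_def by simp
      next
        fix r a assume a: "a \<in> D1"
        have ra: "s1 r a \<in> D1" using P1 a unfolding fg_projective_def lmodule_def by blast
        have "d1 (s1 r a) = s0 r (d1 a)" using hd1 a unfolding lhom_def by blast
        moreover have "d1 a \<in> D0" using hd1 a unfolding lhom_def by auto
        ultimately have "i (d1 (s1 r a)) = free_smult r (i (d1 a))" using hi unfolding lhom_def by auto
        then show "\<phi> k (s1 r a) = r * \<phi> k a" using a ra unfolding \<phi>_def free_smult_def by simp
      qed simp
      have "\<phi> k \<in> dual_carrier D1 s1" using lin unfolding dual_carrier_def \<phi>_def by auto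
      moreover have "dual_map D2 d2 (\<phi> k) = 0"
      proof
        fix y
        show "dual_map D2 d2 (\<phi> k) y = 0 y"
        proof (cases "y \<in> D2")
          case True
          then have "d2 y \<in> d2 ` D2" by blast
          then have "d2 y \<in> D1" "d1 (d2 y) = 0" using exact by auto
          then show ?thesis unfolding dual_map_def \<phi>_def using True i0 by simp
        qed (simp add: dual_map_def)
      qed
      ultimately show ?thesis using imf by blast
    qed
    have "\<forall>k. i (d1 x) k = 0"
    proof
      fix k have "\<phi> k x = 0" using fz phiin by blast
      then show "i (d1 x) k = 0" using xD unfolding \<phi>_def by simp
    qed
    then have "i (d1 x) = 0" by auto
    moreover have "d1 x \<in> D0" using hd1 xD unfolding lhom_def by auto
    ultimately have "d1 x = 0" using pi p0 by metis
    then show "x \<in> d2 ` D2" using exact xD by blast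
  qed
qed

end
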